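(* Let $\mathcal P\subset\nabla$ be a family of parameters. Suppose that for every $k\ge0$ the maximum $\max\{f(k;\lambda,\boldsymbol p):(\lambda,\boldsymbol p)\in\mathcal P\}$ is attained, and is attained (only) on $\mathcal P\cap\mathcal M_k$, where $\mathcal M_k=\{(\lambda,\boldsymbol p)\in\nabla:\lambda+\sum_ip_i=k\}$. Then the family $\mathcal P$ is cross modal.
   Context: $\nabla=\{(\lambda,\boldsymbol p):\lambda\ge0,\ 1\ge p_1\ge p_2\ge\dots\ge0,\ \sum_ip_i<\infty\}$. For $(\lambda,\boldsymbol p)\in\nabla$, $f(k;\lambda,\boldsymbol p)$ is the probability that $X+\sum_iB_i=k$ where $X\sim\mathrm{Poisson}(\lambda)$, $B_i\sim\mathrm{Bernoulli}(p_i)$ are independent. A mode of $f(\cdot;\lambda,\boldsymbol p)$ is any $k$ at which it attains its maximum. The family $\mathcal P$ is cross modal if for every $k\ge0$ the likelihood $(\lambda,\boldsymbol p)\mapsto f(k;\lambda,\boldsymbol p)$ attains its maximum over $\mathcal P$, and for every maximiser $(\lambda,\boldsymbol p)$, $k$ is a mode of $f(\cdot;\lambda,\boldsymbol p)$. *)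

theory Defs
  imports "HOL-Analysis.Analysis"
begin

text \<open>A parameter is a pair (lambda, p) with p :: nat => real the Bernoulli sequence
  p_0 >= p_1 >= ... (0-indexed).\<close>

definition nabla :: "(real \<times> (nat \<Rightarrow> real)) set" where
  "nabla = {(lam, p). lam \<ge> 0 \<and> (\<forall>i. 0 \<le> p i \<and> p i \<le> 1) \<and> decseq p \<and> summable p}"

text \<open>Probability that X + B_0 + ... + B_(n-1) = k, where X ~ Poisson(lam) and
  B_i ~ Bernoulli(p i) are independent: sum over the set S of indices i < n with B_i = 1.\<close>

definition f_trunc :: "nat \<Rightarrow> nat \<Rightarrow> real \<Rightarrow> (nat \<Rightarrow> real) \<Rightarrow> real" where
  "f_trunc n k lam p =
     (\<Sum>S\<in>{S. S \<subseteq> {..<n} \<and> card S \<le> k}.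
        (\<Prod>i\<in>S. p i) * (\<Prod>i\<in>{..<n} - S. 1 - p i) *
        (lam ^ (k - card S) / fact (k - card S) * exp (- lam)))"

text \<open>f(k; lam, p) = P(X + sum_i B_i = k), the distribution of the (a.s. finite) infinite
  sum being the limit of the distributions of the partial sums.\<close>

definition f :: "nat \<Rightarrow> real \<Rightarrow> (nat \<Rightarrow> real) \<Rightarrow> real" where
  "f k lam p = lim (\<lambda>n. f_trunc n k lam p)"

definition is_mode :: "nat \<Rightarrow> real \<Rightarrow> (nat \<Rightarrow> real) \<Rightarrow> bool" where
  "is_mode k lam p \<longleftrightarrow> (\<forall>j. f j lam p \<le> f k lam p)"

definition is_maximiser :: "(real \<times> (nat \<Rightarrow> real)) set \<Rightarrow> nat \<Rightarrow> real \<times> (nat \<Rightarrow> real) \<Rightarrow> bool" where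
  "is_maximiser P k \<theta> \<longleftrightarrow> \<theta> \<in> P \<and> (\<forall>\<theta>'\<in>P. f k (fst \<theta>') (snd \<theta>') \<le> f k (fst \<theta>) (snd \<theta>))"

definition cross_modal :: "(real \<times> (nat \<Rightarrow> real)) set \<Rightarrow> bool" where
  "cross_modal P \<longleftrightarrow>
     (\<forall>k. (\<exists>\<theta>. is_maximiser P k \<theta>) \<and>
          (\<forall>\<theta>. is_maximiser P k \<theta> \<longrightarrow> is_mode k (fst \<theta>) (snd \<theta>)))"

definition M :: "nat \<Rightarrow> (real \<times> (nat \<Rightarrow> real)) set" where
  "M k = {(lam, p). (lam, p) \<in> nabla \<and> lam + (\<Sum>i. p i) = real k}"

end

theory Submission
  imports Defs
begin


definition wt :: "(nat \<Rightarrow> real) \<Rightarrow> nat set \<Rightarrow> nat set \<Rightarrow> real" where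
  "wt p I S = (\<Prod>i\<in>S. p i) * (\<Prod>i\<in>I - S. 1 - p i)"

definition D :: "(nat \<Rightarrow> real) \<Rightarrow> nat set \<Rightarrow> nat \<Rightarrow> real" where
  "D p I j = (\<Sum>S\<in>{S. S \<subseteq> I \<and> card S = j}. wt p I S)"

lemma D_empty: "D p {} j = (if j = 0 then 1 else 0)"
proof -
  have e: "{S. S \<subseteq> {} \<and> card S = j} = (if j = 0 then {{}} else {})" by auto
  show ?thesis unfolding D_def e by (simp add: wt_def)
qed
lemma wt_ins_out:
  assumes "finite I" "a \<notin> I" "S \<subseteq> I"
  shows "wt p (insert a I) S = (1 - p a) * wt p I S"
proof -
  have "insert a I - S = insert a (I - S)" using assms by auto
  then show ?thesis using assms by (simp add: wt_def)
qed

lemma wt_ins_in: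
  assumes "finite I" "a \<notin> I" "S \<subseteq> I"
  shows "wt p (insert a I) (insert a S) = p a * wt p I S"
proof -
  have "insert a I - insert a S = I - S" using assms by auto
  moreover have "a \<notin> S" using assms by auto
  moreover have "finite S" using assms finite_subset by auto
  ultimately show ?thesis using assms by (simp add: wt_def)
qed

lemma D_insert_0:
  assumes "finite I" "a \<notin> I"
  shows "D p (insert a I) 0 = (1 - p a) * D p I 0"
proof -
  have "{S. S \<subseteq> insert a I \<and> card S = 0} = {{}}"
    using assms by (auto dest: finite_subset)
  moreover have "{S. S \<subseteq> I \<and> card S = 0} = {{}}"
    using assms by (auto dest: finite_subset)
  ultimately show ?thesis using wt_ins_out[OF assms, of "{}"] by (simp add: D_def)
qed

lemma D_insert_Suc:
  assumes "finite I" "a \<notin> I"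
  shows "D p (insert a I) (Suc j) = (1 - p a) * D p I (Suc j) + p a * D p I j"
proof -
  let ?A = "{S. S \<subseteq> I \<and> card S = Suc j}"
  let ?B = "{S. S \<subseteq> I \<and> card S = j}"
  have fin: "finite ?A" "finite (insert a ` ?B)" using assms by auto
  have split: "{S. S \<subseteq> insert a I \<and> card S = Suc j} = ?A \<union> insert a ` ?B"
  proof (rule set_eqI, rule iffI)
    fix S assume S: "S \<in> {S. S \<subseteq> insert a I \<and> card S = Suc j}"
    show "S \<in> ?A \<union> insert a ` ?B"
    proof (cases "a \<in> S")
      case True
      then have "S = insert a (S - {a})" by auto
      moreover have "S - {a} \<in> ?B" using S True assms
        by (auto simp: card_Diff_singleton_if dest: finite_subset)
      ultimately show ?thesis by blast
    next
      case False then show ?thesis using S by auto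
    qed
  next
    fix S assume "S \<in> ?A \<union> insert a ` ?B"
    then show "S \<in> {S. S \<subseteq> insert a I \<and> card S = Suc j}"
    proof
      assume "S \<in> ?A" then show ?thesis by auto
    next
      assume "S \<in> insert a ` ?B"
      then obtain T where T: "T \<subseteq> I" "card T = j" "S = insert a T" by auto
      have "finite T" using T assms finite_subset by blast
      moreover have "a \<notin> T" using T assms by auto
      ultimately show ?thesis using T by auto
    qed
  qed
  have disj: "?A \<inter> insert a ` ?B = {}" using assms by auto
  have inj: "inj_on (insert a) ?B"
  proof (rule inj_onI)
    fix x y assume "x \<in> ?B" "y \<in> ?B" "insert a x = insert a y"
    then show "x = y" using assms by (metis (no_types, lifting) insert_ident mem_Collect_eq subset_iff)
  qed
  have "D p (insert a I) (Suc j) = sum (wt p (insert a I)) ?A + sum (wt p (insert a I)) (insert a ` ?B)"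
    unfolding D_def split by (rule sum.union_disjoint[OF fin disj])
  also have "sum (wt p (insert a I)) ?A = (1 - p a) * D p I (Suc j)"
    unfolding D_def sum_distrib_left by (rule sum.cong) (auto intro: wt_ins_out[OF assms])
  also have "sum (wt p (insert a I)) (insert a ` ?B) = sum (\<lambda>S. wt p (insert a I) (insert a S)) ?B"
    by (rule sum.reindex_cong[OF inj]) auto
  also have "\<dots> = p a * D p I j"
    unfolding D_def sum_distrib_left by (rule sum.cong) (auto intro: wt_ins_in[OF assms])
  finally show ?thesis .
qed

lemma D_remove:
  assumes "finite I" "i \<in> I"
  shows "D p I (Suc j) = (1 - p i) * D p (I - {i}) (Suc j) + p i * D p (I - {i}) j"
    and "D p I 0 = (1 - p i) * D p (I - {i}) 0"
proof -
  have e: "I = insert i (I - {i})" using assms by auto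
  show "D p I (Suc j) = (1 - p i) * D p (I - {i}) (Suc j) + p i * D p (I - {i}) j"
    by (subst e, rule D_insert_Suc) (use assms in auto)
  show "D p I 0 = (1 - p i) * D p (I - {i}) 0"
    by (subst e, rule D_insert_0) (use assms in auto)
qed

lemma D_nonneg:
  assumes "\<forall>i\<in>I. 0 \<le> p i \<and> p i \<le> 1"
  shows "0 \<le> D p I j"
  unfolding D_def wt_def
  using assms by (intro sum_nonneg mult_nonneg_nonneg prod_nonneg) auto

lemma D_zero:
  assumes "finite I" "card I < j"
  shows "D p I j = 0"
proof -
  have e: "{S. S \<subseteq> I \<and> card S = j} = {}"
    using assms card_mono by (metis (mono_tags, lifting) empty_Collect_eq not_le)
  show ?thesis unfolding D_def e by simp
qed

lemma D_cong:
  assumes "\<forall>i\<in>I. p i = p' i"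
  shows "D p I j = D p' I j"
  unfolding D_def wt_def
proof (intro sum.cong refl)
  fix S assume "S \<in> {S. S \<subseteq> I \<and> card S = j}"
  then have S: "S \<subseteq> I" by auto
  have "(\<Prod>i\<in>S. p i) = (\<Prod>i\<in>S. p' i)" by (rule prod.cong) (use S assms in auto)
  moreover have "(\<Prod>i\<in>I - S. 1 - p i) = (\<Prod>i\<in>I - S. 1 - p' i)" by (rule prod.cong) (use assms in auto)
  ultimately show "(\<Prod>i\<in>S. p i) * (\<Prod>i\<in>I - S. 1 - p i) = (\<Prod>i\<in>S. p' i) * (\<Prod>i\<in>I - S. 1 - p' i)" by simp
qed

lemma D_le1:
  assumes "finite I" "\<forall>i\<in>I. 0 \<le> p i \<and> p i \<le> 1"
  shows "D p I j \<le> 1"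
  using assms
proof (induction I arbitrary: j rule: finite_induct)
  case empty then show ?case by (simp add: D_empty)
next
  case (insert x F)
  have h: "0 \<le> p x" "p x \<le> 1" using insert by auto
  have b: "\<And>j. D p F j \<le> 1" "\<And>j. 0 \<le> D p F j" using insert D_nonneg by auto
  show ?case
  proof (cases j)
    case 0 then show ?thesis using D_insert_0[OF insert(1,2)] h b
      by (simp add: mult_le_one)
  next
    case (Suc j')
    have "(1 - p x) * D p F (Suc j') + p x * D p F j' \<le> (1 - p x) * 1 + p x * 1"
      using h b by (intro add_mono mult_left_mono) auto
    then show ?thesis using Suc D_insert_Suc[OF insert(1,2)] by simp
  qed
qed

lemma D_sizebias:
  assumes "finite I"
  shows "real (Suc j) * D p I (Suc j) = (\<Sum>i\<in>I. p i * D p (I - {i}) j)"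
  using assms
proof (induction I arbitrary: j rule: finite_induct)
  case empty then show ?case by (simp add: D_empty)
next
  case (insert x F)
  have s: "(\<Sum>i\<in>insert x F. p i * D p (insert x F - {i}) j)
      = p x * D p F j + (\<Sum>i\<in>F. p i * D p (insert x (F - {i})) j)"
  proof -
    have "(\<Sum>i\<in>insert x F. p i * D p (insert x F - {i}) j)
       = p x * D p (insert x F - {x}) j + (\<Sum>i\<in>F. p i * D p (insert x F - {i}) j)"
      using insert by (simp add: sum.insert)
    also have "insert x F - {x} = F" using insert by auto
    also have "(\<Sum>i\<in>F. p i * D p (insert x F - {i}) j) = (\<Sum>i\<in>F. p i * D p (insert x (F - {i})) j)"
      by (rule sum.cong) (use insert.hyps in \<open>auto simp: insert_Diff_if\<close>)
    finally show ?thesis .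
  qed
  show ?case
  proof (cases j)
    case 0
    have "(\<Sum>i\<in>F. p i * D p (insert x (F - {i})) j) = (1 - p x) * (\<Sum>i\<in>F. p i * D p (F - {i}) 0)"
      unfolding sum_distrib_left
      using 0 by (intro sum.cong refl) (simp add: D_insert_0 insert.hyps)
    also have "\<dots> = (1 - p x) * (real (Suc 0) * D p F (Suc 0))" using insert.IH[of 0] by simp
    finally have "(\<Sum>i\<in>F. p i * D p (insert x (F - {i})) j) = (1 - p x) * D p F 1" by simp
    then show ?thesis using s 0 D_insert_Suc[OF insert(1,2), of p 0] by (simp add: algebra_simps)
  next
    case (Suc j')
    have "(\<Sum>i\<in>F. p i * D p (insert x (F - {i})) j)
       = (1 - p x) * (\<Sum>i\<in>F. p i * D p (F - {i}) (Suc j')) + p x * (\<Sum>i\<in>F. p i * D p (F - {i}) j')"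
      unfolding sum_distrib_left sum.distrib[symmetric]
      using Suc by (intro sum.cong refl) (simp add: D_insert_Suc insert.hyps algebra_simps)
    also have "\<dots> = (1 - p x) * (real (Suc (Suc j')) * D p F (Suc (Suc j'))) + p x * (real (Suc j') * D p F (Suc j'))"
      using insert.IH[of "Suc j'"] insert.IH[of j'] by simp
    finally have e: "(\<Sum>i\<in>F. p i * D p (insert x (F - {i})) j)
        = (1 - p x) * (real (Suc (Suc j')) * D p F (Suc (Suc j'))) + p x * (real (Suc j') * D p F (Suc j'))" .
    have l: "D p (insert x F) (Suc j) = (1 - p x) * D p F (Suc j) + p x * D p F j"
      by (rule D_insert_Suc[OF insert(1,2)])
    show ?thesis unfolding s e l using Suc by (simp add: algebra_simps)
  qed
qed


lemma D_qident:
  assumes "finite I"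
  shows "(\<Sum>i\<in>I. (1 - p i) * D p (I - {i}) j) = (real (card I) - real j) * D p I j"
  using assms
proof (induction I arbitrary: j rule: finite_induct)
  case empty then show ?case by (simp add: D_empty)
next
  case (insert x F)
  have s: "(\<Sum>i\<in>insert x F. (1 - p i) * D p (insert x F - {i}) j)
      = (1 - p x) * D p F j + (\<Sum>i\<in>F. (1 - p i) * D p (insert x (F - {i})) j)"
  proof -
    have "(\<Sum>i\<in>insert x F. (1 - p i) * D p (insert x F - {i}) j)
       = (1 - p x) * D p (insert x F - {x}) j + (\<Sum>i\<in>F. (1 - p i) * D p (insert x F - {i}) j)"
      using insert by (simp add: sum.insert)
    also have "insert x F - {x} = F" using insert by auto
    also have "(\<Sum>i\<in>F. (1 - p i) * D p (insert x F - {i}) j) = (\<Sum>i\<in>F. (1 - p i) * D p (insert x (F - {i})) j)"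
      by (rule sum.cong) (use insert.hyps in \<open>auto simp: insert_Diff_if\<close>)
    finally show ?thesis .
  qed
  have c: "card (insert x F) = Suc (card F)" using insert by simp
  show ?case
  proof (cases j)
    case 0
    have "(\<Sum>i\<in>F. (1 - p i) * D p (insert x (F - {i})) j) = (1 - p x) * (\<Sum>i\<in>F. (1 - p i) * D p (F - {i}) 0)"
      unfolding sum_distrib_left
      using 0 by (intro sum.cong refl) (simp add: D_insert_0 insert.hyps)
    also have "\<dots> = (1 - p x) * (real (card F) * D p F 0)" using insert.IH[of 0] by simp
    finally have e: "(\<Sum>i\<in>F. (1 - p i) * D p (insert x (F - {i})) j) = (1 - p x) * (real (card F) * D p F 0)" .
    have l: "D p (insert x F) j = (1 - p x) * D p F 0"
      unfolding 0 by (rule D_insert_0[OF insert(1,2)])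
    show ?thesis unfolding s e l c using 0 by (simp add: algebra_simps)
  next
    case (Suc j')
    have "(\<Sum>i\<in>F. (1 - p i) * D p (insert x (F - {i})) j)
       = (1 - p x) * (\<Sum>i\<in>F. (1 - p i) * D p (F - {i}) (Suc j')) + p x * (\<Sum>i\<in>F. (1 - p i) * D p (F - {i}) j')"
      unfolding sum_distrib_left sum.distrib[symmetric]
      using Suc by (intro sum.cong refl) (simp add: D_insert_Suc insert.hyps algebra_simps)
    also have "\<dots> = (1 - p x) * ((real (card F) - real (Suc j')) * D p F (Suc j')) + p x * ((real (card F) - real j') * D p F j')"
      using insert.IH[of "Suc j'"] insert.IH[of j'] by simp
    finally have e: "(\<Sum>i\<in>F. (1 - p i) * D p (insert x (F - {i})) j)
       = (1 - p x) * ((real (card F) - real (Suc j')) * D p F (Suc j')) + p x * ((real (card F) - real j') * D p F j')" .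
    have l: "D p (insert x F) j = (1 - p x) * D p F (Suc j') + p x * D p F j'"
      unfolding Suc by (rule D_insert_Suc[OF insert(1,2)])
    show ?thesis unfolding s e l c using Suc by (simp add: algebra_simps)
  qed
qed

lemma D_LU:
  assumes "finite I" "\<forall>i\<in>I. 0 \<le> p i \<and> p i \<le> 1"
  shows "(\<forall>j. real (Suc j) \<le> (\<Sum>i\<in>I. p i) \<longrightarrow> D p I j \<le> D p I (Suc j)) \<and>
         (\<forall>j. (\<Sum>i\<in>I. p i) \<le> real j \<longrightarrow> D p I (Suc j) \<le> D p I j)"
  using assms
proof (induction I rule: finite_psubset_induct)
  case (psubset I)
  let ?mu = "\<Sum>i\<in>I. p i"
  have pr: "\<And>i. i \<in> I \<Longrightarrow> 0 \<le> p i \<and> p i \<le> 1" using psubset.prems by auto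
  have IH: "(\<forall>j. real (Suc j) \<le> (\<Sum>k\<in>I-{i}. p k) \<longrightarrow> D p (I-{i}) j \<le> D p (I-{i}) (Suc j)) \<and>
         (\<forall>j. (\<Sum>k\<in>I-{i}. p k) \<le> real j \<longrightarrow> D p (I-{i}) (Suc j) \<le> D p (I-{i}) j)"
    if "i \<in> I" for i
    using psubset.IH[of "I - {i}"] psubset.prems that by auto
  have musub: "(\<Sum>k\<in>I-{i}. p k) = ?mu - p i" if "i \<in> I" for i
    using that psubset.hyps by (simp add: sum_diff1)
  have Dn: "\<And>J j. J \<subseteq> I \<Longrightarrow> 0 \<le> D p J j" using D_nonneg pr by (metis subsetD)
  show ?case
  proof (intro conjI allI impI)
    fix j assume hj: "real (Suc j) \<le> ?mu"
    have key: "p i * D p I j \<le> p i * D p (I-{i}) j" if i: "i \<in> I" for i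
    proof -
      have "D p I j \<le> D p (I-{i}) j"
      proof (cases j)
        case 0
        have "D p I 0 = (1 - p i) * D p (I - {i}) 0" by (rule D_remove(2)[OF psubset.hyps i])
        also have "\<dots> \<le> 1 * D p (I - {i}) 0"
          using pr[OF i] Dn[of "I - {i}" 0] by (intro mult_right_mono) auto
        finally show ?thesis using 0 by simp
      next
        case (Suc j')
        have "real (Suc j') \<le> (\<Sum>k\<in>I-{i}. p k)" using hj Suc musub[OF i] pr[OF i] by simp
        then have m: "D p (I-{i}) j' \<le> D p (I-{i}) (Suc j')" using IH[OF i] by blast
        have "D p I j = (1 - p i) * D p (I - {i}) (Suc j') + p i * D p (I - {i}) j'"
          unfolding Suc by (rule D_remove(1)[OF psubset.hyps i])
        also have "\<dots> \<le> (1 - p i) * D p (I - {i}) (Suc j') + p i * D p (I - {i}) (Suc j')"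
          using m pr[OF i] by (intro add_left_mono mult_left_mono) auto
        finally show ?thesis using Suc by (simp add: algebra_simps)
      qed
      then show ?thesis using pr[OF i] by (intro mult_left_mono) auto
    qed
    have "?mu * D p I j = (\<Sum>i\<in>I. p i * D p I j)" by (simp add: sum_distrib_right)
    also have "\<dots> \<le> (\<Sum>i\<in>I. p i * D p (I-{i}) j)" by (rule sum_mono) (rule key)
    also have "\<dots> = real (Suc j) * D p I (Suc j)" by (rule D_sizebias[OF psubset.hyps, symmetric])
    finally have a: "?mu * D p I j \<le> real (Suc j) * D p I (Suc j)" .
    have "real (Suc j) * D p I j \<le> ?mu * D p I j"
      using hj Dn[of I j] by (intro mult_right_mono) auto
    then have "real (Suc j) * D p I j \<le> real (Suc j) * D p I (Suc j)" using a by linarith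
    then show "D p I j \<le> D p I (Suc j)" by (simp add: mult_le_cancel_left)
  next
    fix j assume hj: "?mu \<le> real j"
    show "D p I (Suc j) \<le> D p I j"
    proof (cases "card I \<le> j")
      case True
      then show ?thesis using D_zero[OF psubset.hyps, of "Suc j" p] Dn[of I j] by simp
    next
      case False
      have key: "(1 - p i) * D p I (Suc j) \<le> (1 - p i) * D p (I-{i}) j" if i: "i \<in> I" for i
      proof -
        have "(\<Sum>k\<in>I-{i}. p k) \<le> real j" using hj musub[OF i] pr[OF i] by simp
        then have m: "D p (I-{i}) (Suc j) \<le> D p (I-{i}) j" using IH[OF i] by blast
        have "D p I (Suc j) = (1 - p i) * D p (I - {i}) (Suc j) + p i * D p (I - {i}) j"
          by (rule D_remove(1)[OF psubset.hyps i])
        also have "\<dots> \<le> (1 - p i) * D p (I - {i}) j + p i * D p (I - {i}) j"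
          using m pr[OF i] by (intro add_right_mono mult_left_mono) auto
        finally have "D p I (Suc j) \<le> D p (I-{i}) j" by (simp add: algebra_simps)
        then show ?thesis using pr[OF i] by (intro mult_left_mono) auto
      qed
      have "(real (card I) - ?mu) * D p I (Suc j) = (\<Sum>i\<in>I. (1 - p i) * D p I (Suc j))"
        by (subst sum_distrib_right[symmetric]) (simp add: sum_subtractf)
      also have "\<dots> \<le> (\<Sum>i\<in>I. (1 - p i) * D p (I-{i}) j)" by (rule sum_mono) (rule key)
      also have "\<dots> = (real (card I) - real j) * D p I j" by (rule D_qident[OF psubset.hyps])
      finally have a: "(real (card I) - ?mu) * D p I (Suc j) \<le> (real (card I) - real j) * D p I j" .
      have "(real (card I) - real j) * D p I (Suc j) \<le> (real (card I) - ?mu) * D p I (Suc j)"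
        using hj Dn[of I "Suc j"] by (intro mult_right_mono) auto
      then have "(real (card I) - real j) * D p I (Suc j) \<le> (real (card I) - real j) * D p I j"
        using a by linarith
      moreover have "real (card I) - real j > 0" using False by simp
      ultimately show ?thesis by (simp add: mult_le_cancel_left)
    qed
  qed
qed

lemma up_le: "(\<And>j. Suc j \<le> k \<Longrightarrow> g j \<le> g (Suc j)) \<Longrightarrow> j \<le> k \<Longrightarrow> (g j :: real) \<le> g k"
proof (induction k)
  case 0 then show ?case by simp
next
  case (Suc k)
  show ?case
  proof (cases "j = Suc k")
    case False
    then have "g j \<le> g k" using Suc by simp
    also have "g k \<le> g (Suc k)" using Suc.prems by simp
    finally show ?thesis .
  qed simp
qed

lemma down_le: "(\<And>j. k \<le> j \<Longrightarrow> g (Suc j) \<le> g j) \<Longrightarrow> k \<le> j \<Longrightarrow> (g j :: real) \<le> g k"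
proof (induction j)
  case 0 then show ?case by simp
next
  case (Suc j)
  show ?case
  proof (cases "k = Suc j")
    case False
    then have "k \<le> j" using Suc by simp
    then have "g (Suc j) \<le> g j" using Suc.prems by simp
    also have "g j \<le> g k" using Suc \<open>k \<le> j\<close> by simp
    finally show ?thesis .
  qed simp
qed

lemma D_mode:
  assumes "finite I" "\<forall>i\<in>I. 0 \<le> p i \<and> p i \<le> 1" "(\<Sum>i\<in>I. p i) = real k"
  shows "D p I j \<le> D p I k"
proof -
  note LU = D_LU[OF assms(1,2)]
  show ?thesis
  proof (cases "j \<le> k")
    case True
    show ?thesis by (rule up_le[OF _ True]) (use LU assms(3) in auto)
  next
    case False
    show ?thesis by (rule down_le) (use LU assms(3) False in auto)
  qed
qed



lemma D_union:
  assumes "finite I" "finite J" "I \<inter> J = {}"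
  shows "D p (I \<union> J) j = (\<Sum>m\<le>j. D p I m * D p J (j - m))"
  using assms(2,3)
proof (induction J arbitrary: j rule: finite_induct)
  case empty
  have "(\<Sum>m\<le>j. D p I m * D p {} (j - m)) = (\<Sum>m\<le>j. if m = j then D p I m else 0)"
    by (intro sum.cong refl) (auto simp: D_empty)
  also have "\<dots> = D p I j" by simp
  finally show ?case by simp
next
  case (insert x F)
  have xI: "x \<notin> I \<union> F" using insert by auto
  have dis: "I \<inter> F = {}" using insert by auto
  have fin: "finite (I \<union> F)" using assms(1) insert by auto
  have e: "I \<union> insert x F = insert x (I \<union> F)" by auto
  show ?case
  proof (cases j)
    case 0
    show ?thesis unfolding e 0 D_insert_0[OF fin xI] D_insert_0[OF insert(1,2)]
      using insert.IH[OF dis, of 0] by (simp add: D_insert_0[OF insert(1,2)])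
  next
    case (Suc j')
    have r1: "(\<Sum>m\<le>Suc j'. D p I m * D p (insert x F) (Suc j' - m))
       = (\<Sum>m\<le>j'. D p I m * D p (insert x F) (Suc (j' - m))) + D p I (Suc j') * ((1 - p x) * D p F 0)"
      by (simp add: sum.atMost_Suc Suc_diff_le D_insert_0[OF insert(1,2)])
    have r2: "(\<Sum>m\<le>j'. D p I m * D p (insert x F) (Suc (j' - m)))
       = (1 - p x) * (\<Sum>m\<le>j'. D p I m * D p F (Suc (j' - m))) + p x * (\<Sum>m\<le>j'. D p I m * D p F (j' - m))"
      unfolding sum_distrib_left sum.distrib[symmetric]
      by (intro sum.cong refl) (simp add: D_insert_Suc[OF insert(1,2)] algebra_simps)
    have l1: "D p (I \<union> F) (Suc j') = (\<Sum>m\<le>j'. D p I m * D p F (Suc (j' - m))) + D p I (Suc j') * D p F 0"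
      using insert.IH[OF dis, of "Suc j'"] by (simp add: sum.atMost_Suc Suc_diff_le)
    have l2: "D p (I \<union> F) j' = (\<Sum>m\<le>j'. D p I m * D p F (j' - m))"
      using insert.IH[OF dis, of j'] by simp
    show ?thesis unfolding e Suc D_insert_Suc[OF fin xI] r1 r2 l1 l2
      by (simp add: algebra_simps)
  qed
qed

lemma D_const:
  assumes "finite J" "\<forall>i\<in>J. p i = c"
  shows "D p J m = real (card J choose m) * c ^ m * (1 - c) ^ (card J - m)"
proof -
  have "D p J m = (\<Sum>S\<in>{S. S \<subseteq> J \<and> card S = m}. c ^ m * (1 - c) ^ (card J - m))"
    unfolding D_def
  proof (intro sum.cong refl)
    fix S assume "S \<in> {S. S \<subseteq> J \<and> card S = m}"
    then have S: "S \<subseteq> J" "card S = m" by auto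
    have fS: "finite S" using S assms finite_subset by blast
    have "(\<Prod>i\<in>S. p i) = c ^ m" using S assms by (simp add: subset_iff)
    moreover have "(\<Prod>i\<in>J - S. 1 - p i) = (1 - c) ^ (card J - m)"
      using S assms fS by (simp add: card_Diff_subset)
    ultimately show "wt p J S = c ^ m * (1 - c) ^ (card J - m)" by (simp add: wt_def)
  qed
  also have "\<dots> = real (card J choose m) * (c ^ m * (1 - c) ^ (card J - m))"
    using n_subsets[OF assms(1), of m] by simp
  finally show ?thesis by simp
qed

definition pois :: "real \<Rightarrow> nat \<Rightarrow> real" where
  "pois lam l = lam ^ l / fact l * exp (- lam)"

lemma f_trunc_eq: "f_trunc n k lam p = (\<Sum>m\<le>k. D p {..<n} m * pois lam (k - m))"
proof -
  let ?A = "{S. S \<subseteq> {..<n} \<and> card S \<le> k}"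
  let ?h = "\<lambda>S. wt p {..<n} S * pois lam (k - card S)"
  have finA: "finite ?A" by auto
  have "f_trunc n k lam p = sum ?h ?A"
    unfolding f_trunc_def wt_def pois_def by (simp add: mult.assoc)
  also have "\<dots> = (\<Sum>m\<le>k. sum ?h {S \<in> ?A. card S = m})"
    by (rule sum.group[symmetric, OF finA]) auto
  also have "\<dots> = (\<Sum>m\<le>k. D p {..<n} m * pois lam (k - m))"
  proof (intro sum.cong refl)
    fix m assume "m \<in> {..k}"
    then have e: "{S \<in> ?A. card S = m} = {S. S \<subseteq> {..<n} \<and> card S = m}" by auto
    show "sum ?h {S \<in> ?A. card S = m} = D p {..<n} m * pois lam (k - m)"
      unfolding e D_def sum_distrib_right by (intro sum.cong refl) auto
  qed
  finally show ?thesis .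
qed

lemma convergent_of_summable_diff:
  fixes x :: "nat \<Rightarrow> real"
  assumes "summable (\<lambda>n. norm (x (Suc n) - x n))"
  shows "convergent x"
proof -
  have "summable (\<lambda>n. x (Suc n) - x n)" using summable_norm_cancel[OF assms] .
  then have "convergent (\<lambda>n. \<Sum>i<n. x (Suc i) - x i)" by (simp add: summable_iff_convergent)
  then have "convergent (\<lambda>n. x 0 + (\<Sum>i<n. x (Suc i) - x i))" by (simp add: convergent_add_const_iff)
  moreover have "(\<lambda>n. x 0 + (\<Sum>i<n. x (Suc i) - x i)) = x" by (simp add: sum_lessThan_telescope)
  ultimately show ?thesis by simp
qed

lemma D_lessThan_convergent:
  assumes "\<forall>i. 0 \<le> p i \<and> p i \<le> 1" "summable p"
  shows "convergent (\<lambda>n. D p {..<n} m)"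
proof (rule convergent_of_summable_diff, rule summable_comparison_test[OF _ assms(2)], rule exI[of _ 0], intro allI impI)
  fix n :: nat
  have pr: "\<forall>i\<in>{..<n}. 0 \<le> p i \<and> p i \<le> 1" using assms by auto
  have b: "\<And>j. 0 \<le> D p {..<n} j" "\<And>j. D p {..<n} j \<le> 1"
    using D_nonneg[OF pr] D_le1[OF _ pr] by auto
  have e: "{..<Suc n} = insert n {..<n}" by auto
  have p: "0 \<le> p n" "p n \<le> 1" using assms by auto
  show "norm (norm (D p {..<Suc n} m - D p {..<n} m)) \<le> p n"
  proof (cases m)
    case 0
    have "D p {..<Suc n} m - D p {..<n} m = - p n * D p {..<n} 0"
      unfolding e 0 by (subst D_insert_0) (auto simp: algebra_simps)
    moreover have "\<bar>- p n * D p {..<n} 0\<bar> \<le> p n * 1"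
      using b p mult_left_mono[of "D p {..<n} 0" 1 "p n"] by (simp add: abs_mult)
    ultimately show ?thesis by simp
  next
    case (Suc m')
    have "D p {..<Suc n} m - D p {..<n} m = p n * (D p {..<n} m' - D p {..<n} (Suc m'))"
      unfolding e Suc by (subst D_insert_Suc) (auto simp: algebra_simps)
    moreover have "\<bar>p n * (D p {..<n} m' - D p {..<n} (Suc m'))\<bar> \<le> p n * 1"
      using b[of m'] b[of "Suc m'"] p unfolding abs_mult by (intro mult_mono) auto
    ultimately show ?thesis by simp
  qed
qed



lemma binom_part:
  assumes "l \<le> n" "0 < n"
  shows "real (n choose l) * (lam / real n) ^ l = lam ^ l / fact l * (\<Prod>i=0..<l. (real n - real i) / real n)"
proof -
  have "real (n choose l) = (\<Prod>i=0..<l. real (n - i)) / (\<Prod>i=0..<l. real (l - i))"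
    using binomial_altdef_of_nat[OF assms(1)] by (simp add: prod_dividef)
  also have "(\<Prod>i=0..<l. real (l - i)) = fact l" by (simp add: fact_prod_rev)
  also have "(\<Prod>i=0..<l. real (n - i)) = (\<Prod>i=0..<l. real n - real i)"
    using assms by (intro prod.cong refl) (auto simp: of_nat_diff)
  finally have a: "real (n choose l) = (\<Prod>i=0..<l. real n - real i) / fact l" .
  have b: "(\<Prod>i=0..<l. (real n - real i) / real n) = (\<Prod>i=0..<l. real n - real i) / real n ^ l"
    by (simp add: prod_dividef)
  show ?thesis unfolding a b by (simp add: power_divide)
qed

lemma binom_pois:
  assumes "0 \<le> lam"
  shows "(\<lambda>n. real (n choose l) * (lam / real n) ^ l * (1 - lam / real n) ^ (n - l)) \<longlonglongrightarrow> pois lam l"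
proof -
  define N where "N = l + nat \<lceil>lam\<rceil> + 1"
  have ev: "eventually (\<lambda>n. real (n choose l) * (lam / real n) ^ l * (1 - lam / real n) ^ (n - l)
      = (lam ^ l / fact l * (\<Prod>i=0..<l. 1 - real i / real n)) * ((1 + (- lam) / real n) ^ n / (1 - lam / real n) ^ l)) sequentially"
    unfolding eventually_sequentially
  proof (rule exI[of _ N], intro allI impI)
    fix n assume n: "N \<le> n"
    then have ln: "l \<le> n" and np: "0 < n" unfolding N_def by auto
    have "real n > lam" using n unfolding N_def by linarith
    then have nz: "1 - lam / real n \<noteq> 0" using np by (simp add: field_simps)
    have p: "(\<Prod>i=0..<l. (real n - real i) / real n) = (\<Prod>i=0..<l. 1 - real i / real n)"
      using np by (intro prod.cong refl) (simp add: field_simps)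
    have q: "(1 - lam / real n) ^ (n - l) = (1 + (- lam) / real n) ^ n / (1 - lam / real n) ^ l"
      using nz ln by (simp add: power_diff)
    show "real (n choose l) * (lam / real n) ^ l * (1 - lam / real n) ^ (n - l)
      = (lam ^ l / fact l * (\<Prod>i=0..<l. 1 - real i / real n)) * ((1 + (- lam) / real n) ^ n / (1 - lam / real n) ^ l)"
      unfolding binom_part[OF ln np] p q by simp
  qed
  have t1: "(\<lambda>n. lam ^ l / fact l * (\<Prod>i=0..<l. 1 - real i / real n)) \<longlonglongrightarrow> lam ^ l / fact l * (\<Prod>i=0..<l. 1 - 0)"
    by (intro tendsto_intros)
  have t2: "(\<lambda>n. (1 + (- lam) / real n) ^ n / (1 - lam / real n) ^ l) \<longlonglongrightarrow> exp (- lam) / (1 - 0) ^ l"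
    by (intro tendsto_intros tendsto_exp_limit_sequentially) auto
  have "(\<lambda>n. (lam ^ l / fact l * (\<Prod>i=0..<l. 1 - real i / real n)) * ((1 + (- lam) / real n) ^ n / (1 - lam / real n) ^ l))
     \<longlonglongrightarrow> (lam ^ l / fact l * (\<Prod>i=0..<l. 1 - 0)) * (exp (- lam) / (1 - 0) ^ l)"
    by (rule tendsto_mult[OF t1 t2])
  then have "(\<lambda>n. (lam ^ l / fact l * (\<Prod>i=0..<l. 1 - real i / real n)) * ((1 + (- lam) / real n) ^ n / (1 - lam / real n) ^ l))
     \<longlonglongrightarrow> pois lam l" by (simp add: pois_def)
  then show ?thesis using tendsto_cong[OF ev] by simp
qed



lemma darroch_inf:
  assumes "(lam, p) \<in> nabla" "lam + suminf p = real k"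
  shows "f j lam p \<le> f k lam p"
proof -
  have lam0: "0 \<le> lam" and pr: "\<forall>i. 0 \<le> p i \<and> p i \<le> 1" and sp: "summable p"
    using assms(1) by (auto simp: nabla_def)
  define dl where "dl m = lim (\<lambda>n. D p {..<n} m)" for m
  have dconv: "(\<lambda>n. D p {..<n} m) \<longlonglongrightarrow> dl m" for m
    unfolding dl_def using D_lessThan_convergent[OF pr sp] convergent_LIMSEQ_iff by blast
  define F where "F j = (\<Sum>m\<le>j. dl m * pois lam (j - m))" for j
  have fF: "f j lam p = F j" for j
  proof -
    have "(\<lambda>n. f_trunc n j lam p) \<longlonglongrightarrow> F j"
      unfolding f_trunc_eq F_def by (intro tendsto_intros dconv)
    then show ?thesis unfolding f_def by (rule limI)
  qed
  define r where "r n = suminf p - (\<Sum>i<n. p i)" for n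
  have r0: "r \<longlonglongrightarrow> 0"
  proof -
    have "(\<lambda>n. suminf p - (\<Sum>i<n. p i)) \<longlonglongrightarrow> suminf p - suminf p"
      by (intro tendsto_intros summable_LIMSEQ[OF sp])
    then show ?thesis unfolding r_def by simp
  qed
  have rnn: "0 \<le> r n" for n
    unfolding r_def using sum_le_suminf[OF sp, of "{..<n}"] pr by auto
  define q where "q n i = (if i < n then p i else if i = n then r n else lam / real n)" for n i
  define T where "T n j = D (q n) {..<Suc n + n} j" for n j
  have split: "{..<Suc n + n} = {..<Suc n} \<union> {Suc n..<Suc n + n}" for n by auto
  have disj: "{..<Suc n} \<inter> {Suc n..<Suc n + n} = {}" for n by auto
  have blk: "D (q n) {Suc n..<Suc n + n} l = real (n choose l) * (lam / real n) ^ l * (1 - lam / real n) ^ (n - l)" for n l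
    using D_const[of "{Suc n..<Suc n + n}" "q n" "lam / real n" l] by (simp add: q_def)
  have qlow: "D (q n) {..<n} m = D p {..<n} m" for n m
    by (rule D_cong) (simp add: q_def)
  have e: "{..<Suc n} = insert n {..<n}" for n by auto
  have Elim: "(\<lambda>n. D (q n) {..<Suc n} m) \<longlonglongrightarrow> dl m" for m
  proof (cases m)
    case 0
    have "D (q n) {..<Suc n} m = (1 - r n) * D p {..<n} 0" for n
      unfolding e 0 by (subst D_insert_0) (auto simp: qlow q_def)
    moreover have "(\<lambda>n. (1 - r n) * D p {..<n} 0) \<longlonglongrightarrow> (1 - 0) * dl 0"
      by (intro tendsto_intros r0 dconv)
    ultimately show ?thesis using 0 by simp
  next
    case (Suc m')
    have "D (q n) {..<Suc n} m = (1 - r n) * D p {..<n} (Suc m') + r n * D p {..<n} m'" for n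
      unfolding e Suc by (subst D_insert_Suc) (auto simp: qlow q_def)
    moreover have "(\<lambda>n. (1 - r n) * D p {..<n} (Suc m') + r n * D p {..<n} m') \<longlonglongrightarrow> (1 - 0) * dl (Suc m') + 0 * dl m'"
      by (intro tendsto_intros r0 dconv)
    ultimately show ?thesis using Suc by simp
  qed
  have Tlim: "(\<lambda>n. T n j) \<longlonglongrightarrow> F j" for j
  proof -
    have "T n j = (\<Sum>m\<le>j. D (q n) {..<Suc n} m * D (q n) {Suc n..<Suc n + n} (j - m))" for n
      unfolding T_def split by (rule D_union) (auto)
    moreover have "(\<lambda>n. \<Sum>m\<le>j. D (q n) {..<Suc n} m * D (q n) {Suc n..<Suc n + n} (j - m)) \<longlonglongrightarrow> F j"
      unfolding blk F_def by (intro tendsto_sum tendsto_mult Elim binom_pois lam0)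
    ultimately show ?thesis by simp
  qed
  obtain N1 where N1: "\<forall>n\<ge>N1. r n < 1"
    using order_tendstoD(2)[OF r0, of 1] by (auto simp: eventually_sequentially)
  define N where "N = N1 + nat \<lceil>lam\<rceil> + 1"
  have mode: "T n j \<le> T n k" if n: "n \<ge> N" for n j
  proof -
    have np: "0 < n" using n unfolding N_def by auto
    have "real n \<ge> lam" using n unfolding N_def by linarith
    then have lq: "lam / real n \<le> 1" using np by (simp add: field_simps)
    have rn: "r n \<le> 1" using N1 n unfolding N_def by (auto intro: less_imp_le)
    have qr: "\<forall>i\<in>{..<Suc n + n}. 0 \<le> q n i \<and> q n i \<le> 1"
      using pr rnn rn lq lam0 by (auto simp: q_def)
    have s1: "(\<Sum>i\<in>{..<Suc n}. q n i) = (\<Sum>i<n. p i) + r n"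
      by (simp add: q_def)
    have s2: "(\<Sum>i\<in>{Suc n..<Suc n + n}. q n i) = lam"
    proof -
      have "(\<Sum>i\<in>{Suc n..<Suc n + n}. q n i) = (\<Sum>i\<in>{Suc n..<Suc n + n}. lam / real n)"
        by (intro sum.cong refl) (simp add: q_def)
      also have "\<dots> = lam" using np by simp
      finally show ?thesis .
    qed
    have "(\<Sum>i\<in>{..<Suc n + n}. q n i) = real k"
      unfolding split using s1 s2 assms(2) by (subst sum.union_disjoint) (auto simp: r_def)
    then show ?thesis unfolding T_def by (intro D_mode[OF _ qr]) simp_all
  qed
  have "F j \<le> F k"
    by (rule LIMSEQ_le[OF Tlim Tlim]) (use mode in blast)
  then show ?thesis by (simp add: fF)
qed


theorem proposition2:
  fixes P :: "(real \<times> (nat \<Rightarrow> real)) set"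
  assumes "P \<subseteq> nabla"
    and "\<And>k. \<exists>\<theta>. is_maximiser P k \<theta>"
    and "\<And>k \<theta>. is_maximiser P k \<theta> \<Longrightarrow> \<theta> \<in> M k"
  shows "cross_modal P"
  unfolding cross_modal_def
proof (intro allI conjI impI)
  fix k
  show "\<exists>\<theta>. is_maximiser P k \<theta>" by (rule assms(2))
  fix \<theta> assume "is_maximiser P k \<theta>"
  then have "\<theta> \<in> M k" by (rule assms(3))
  then have h: "(fst \<theta>, snd \<theta>) \<in> nabla" "fst \<theta> + suminf (snd \<theta>) = real k"
    by (auto simp: M_def split: prod.splits)
  show "is_mode k (fst \<theta>) (snd \<theta>)"
    unfolding is_mode_def using darroch_inf[OF h] by blast
qed

end
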